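(* Consider the homophily variant of the diffusion model described in the context, with homophily parameter $\gamma\in(0,1/s)$. Then: (i) For every $t\ge1$ there is $\underline H_t\in\mathbb R\cup\{-\infty\}$ with $D_n^t=\{i:H_i>\underline H_t\}$, and the thresholds can be chosen weakly decreasing in $t$. (ii) Let $0<\gamma<\gamma'<1/s$, and let $D_n^t(\gamma)$ and $D_n^t(\gamma')$ be the sets of new-product consumers under $\gamma$ and $\gamma'$ respectively, with all other parameters equal. Then $D_n^t(\gamma')\subseteq D_n^t(\gamma)$ for all $t\ge1$ (equivalently $\underline H_t$ is weakly increasing in $\gamma$ for $t\ge 2$). In words, stronger homophily slows diffusion.
   Context: Homophily variant. There are $N$ individuals partitioned into $G\ge2$ groups $N_1,\dots,N_G$, each of size $N/G$. Members of $N_k$ have aspiration level $H_{N_k}$, with $H_{N_1}>\cdots>H_{N_G}$; write $H_i$ for individual $i$'s level. The incumbent $p_c$ gives payoff $v_L$ to everyone, where $H_{N_2}<v_L<H_{N_1}$. The new product $p_n$ gives individual $i$ the payoff $v_{Hi}\ge H_{N_1}$. Product similarities are $s_{p_c,p_c}=s_{p_n,p_n}=1$, $s_{p_n,p_c}=s_p\in(0,1)$ and $s_{p_c,p_n}=0$. Individual similarities: $s_{i,i}=1$; $s_{i,j}=\gamma s$ if $i\ne j$ and $i,j$ lie in the same group; $s_{i,j}=s$ otherwise. Here $s\in(0,1]$ and $\gamma\in(0,1/s)$. Dynamics. In period $0$ everyone consumes $p_c$ ($D_c^0=\{1,\dots,N\}$, $D_n^0=\emptyset$). For $t\ge1$,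 $U_i^t(p_c)=\sum_{t'=0}^{t-1}\sum_{j\in D_c^{t'}}s_{i,j}(v_L-H_i)$ and $U_i^t(p_n)=s_pU_i^t(p_c)+\sum_{t'=0}^{t-1}\sum_{j\in D_n^{t'}}s_{i,j}(v_{Hj}-H_i)$. Individual $i\in D_n^t$ iff $U_i^t(p_n)>U_i^t(p_c)$; otherwise $i\in D_c^t$. *)

theory Defs
  imports Complex_Main "HOL-Library.Extended_Real"
begin

text \<open>Individuals are 0, ..., mN-1; groups are indexed 0, ..., G-1
  (group index k corresponds to the paper's group N_(k+1)); mgrp i is the group of i.
  mHg k is the aspiration level of group k, mvL is v_L, mvH i is v_(Hi),
  msp is s_p, ms is s and mgam is gamma.\<close>
record model =
  mN :: nat
  mgrp :: "nat \<Rightarrow> nat"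
  mHg :: "nat \<Rightarrow> real"
  mvL :: real
  mvH :: "nat \<Rightarrow> real"
  msp :: real
  ms :: real
  mgam :: real

definition Hlev :: "model \<Rightarrow> nat \<Rightarrow> real" where
  "Hlev M i = mHg M (mgrp M i)"

definition sim :: "model \<Rightarrow> nat \<Rightarrow> nat \<Rightarrow> real" where
  "sim M i j = (if i = j then 1 else if mgrp M i = mgrp M j then mgam M * ms M else ms M)"

text \<open>Cumulative utilities at period t given a history D of new-product consumer sets
  (D t' is D_n^t'; D_c^t' is the complement within the population).\<close>
definition Uold :: "model \<Rightarrow> (nat \<Rightarrow> nat set) \<Rightarrow> nat \<Rightarrow> nat \<Rightarrow> real" where
  "Uold M D t i = (\<Sum>t'<t. \<Sum>j\<in>{..<mN M} - D t'. sim M i j * (mvL M - Hlev M i))"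

definition Unew :: "model \<Rightarrow> (nat \<Rightarrow> nat set) \<Rightarrow> nat \<Rightarrow> nat \<Rightarrow> real" where
  "Unew M D t i = msp M * Uold M D t i
      + (\<Sum>t'<t. \<Sum>j\<in>D t'. sim M i j * (mvH M j - Hlev M i))"

text \<open>Dhist M n is the history of new-product consumer sets, correct on periods 0..n.\<close>
primrec Dhist :: "model \<Rightarrow> nat \<Rightarrow> nat \<Rightarrow> nat set" where
  "Dhist M 0 = (\<lambda>t. {})"
| "Dhist M (Suc n) = (let f = Dhist M n in
      f(Suc n := {i \<in> {..<mN M}. Unew M f (Suc n) i > Uold M f (Suc n) i}))"

definition Dn :: "model \<Rightarrow> nat \<Rightarrow> nat set" where
  "Dn M t = Dhist M t t"

definition homophily_setting :: "model \<Rightarrow> nat \<Rightarrow> bool" where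
  "homophily_setting M G \<longleftrightarrow>
     G \<ge> 2 \<and> G dvd mN M \<and>
     (\<forall>i<mN M. mgrp M i < G) \<and>
     (\<forall>k<G. card {i \<in> {..<mN M}. mgrp M i = k} = mN M div G) \<and>
     (\<forall>k k'. k < k' \<longrightarrow> k' < G \<longrightarrow> mHg M k' < mHg M k) \<and>
     mHg M 1 < mvL M \<and> mvL M < mHg M 0 \<and>
     (\<forall>i<mN M. mvH M i \<ge> mHg M 0) \<and>
     0 < msp M \<and> msp M < 1 \<and>
     0 < ms M \<and> ms M \<le> 1"

end

theory Submission
  imports Defs
begin


lemma Dhist_eq: "t \<le> n \<Longrightarrow> Dhist M n t = Dhist M t t"
proof (induction n)
  case 0 then show ?case by simp
next
  case (Suc n)
  show ?case
  proof (cases "t = Suc n")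
    case True then show ?thesis by simp
  next
    case False then have "t \<le> n" using Suc.prems by simp
    then show ?thesis using Suc.IH False by (simp add: Let_def)
  qed
qed

lemma Dn0[simp]: "Dn M 0 = {}" by (simp add: Dn_def)

lemma U_cong:
  assumes "\<forall>t'<t. D t' = D' t'"
  shows "Uold M D t i = Uold M D' t i" "Unew M D t i = Unew M D' t i"
  using assms by (simp_all add: Uold_def Unew_def)

lemma Dn_Suc: "Dn M (Suc n) = {i \<in> {..<mN M}. Unew M (Dn M) (Suc n) i > Uold M (Dn M) (Suc n) i}"
proof -
  have 1: "Dn M (Suc n) = {i \<in> {..<mN M}. Unew M (Dhist M n) (Suc n) i > Uold M (Dhist M n) (Suc n) i}"
    by (simp add: Dn_def Let_def)
  have "\<forall>t'<Suc n. Dhist M n t' = Dn M t'" unfolding Dn_def by (metis Dhist_eq less_Suc_eq_le)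
  then have "\<And>i. Unew M (Dhist M n) (Suc n) i = Unew M (Dn M) (Suc n) i \<and> Uold M (Dhist M n) (Suc n) i = Uold M (Dn M) (Suc n) i"
    using U_cong[of "Suc n" "Dhist M n" "Dn M" M] by blast
  then show ?thesis using 1 by presburger
qed

lemma Dn_sub: "Dn M t \<subseteq> {..<mN M}"
  by (cases t) (auto simp: Dn_Suc)

definition gain :: "model \<Rightarrow> (nat \<Rightarrow> nat set) \<Rightarrow> nat \<Rightarrow> nat \<Rightarrow> real" where
 "gain M D t i = (\<Sum>j<mN M. if j \<in> D t then sim M i j * (mvH M j - Hlev M i)
                     else (msp M - 1) * (sim M i j * (mvL M - Hlev M i)))"

lemma gain_split:
  assumes "D t \<subseteq> {..<mN M}"
  shows "gain M D t i = (\<Sum>j\<in>D t. sim M i j * (mvH M j - Hlev M i))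
     + (msp M - 1) * (\<Sum>j\<in>{..<mN M} - D t. sim M i j * (mvL M - Hlev M i))"
proof -
  have a: "{..<mN M} \<inter> D t = D t" using assms by auto
  have b: "{..<mN M} \<inter> - D t = {..<mN M} - D t" by auto
  show ?thesis unfolding gain_def
    by (simp add: sum.If_cases a b sum_distrib_left)
qed

lemma diff_gain:
  assumes "\<forall>t'<t. D t' \<subseteq> {..<mN M}"
  shows "Unew M D t i - Uold M D t i = (\<Sum>t'<t. gain M D t' i)"
proof -
  have "(\<Sum>t'<t. gain M D t' i) = (\<Sum>t'<t. (\<Sum>j\<in>D t'. sim M i j * (mvH M j - Hlev M i))
     + (msp M - 1) * (\<Sum>j\<in>{..<mN M} - D t'. sim M i j * (mvL M - Hlev M i)))"
    using assms gain_split by (intro sum.cong) auto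
  also have "\<dots> = (\<Sum>t'<t. (\<Sum>j\<in>D t'. sim M i j * (mvH M j - Hlev M i)))
     + (msp M - 1) * Uold M D t i"
    by (simp add: sum.distrib Uold_def sum_distrib_left)
  finally show ?thesis unfolding Unew_def by (simp only:) (simp add: algebra_simps)
qed

lemma mem_Dn_Suc: "i \<in> Dn M (Suc n) \<longleftrightarrow> i < mN M \<and> (\<Sum>t'<Suc n. gain M (Dn M) t' i) > 0"
proof -
  have "\<forall>t'<Suc n. Dn M t' \<subseteq> {..<mN M}" using Dn_sub by blast
  from diff_gain[OF this, of i] have "Unew M (Dn M) (Suc n) i - Uold M (Dn M) (Suc n) i = (\<Sum>t'<Suc n. gain M (Dn M) t' i)" .
  then have "(Unew M (Dn M) (Suc n) i > Uold M (Dn M) (Suc n) i) = ((\<Sum>t'<Suc n. gain M (Dn M) t' i) > 0)" by linarith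
  then show ?thesis unfolding Dn_Suc[of M n] by blast
qed



locale hs =
  fixes M :: model and G :: nat
  assumes hs: "homophily_setting M G" and gpos: "0 < mgam M"
begin

abbreviation "N \<equiv> mN M"
abbreviation "H \<equiv> Hlev M"

lemma grp_lt: "x < N \<Longrightarrow> mgrp M x < G"
  using hs by (simp add: homophily_setting_def)

lemma mHg_dec: "k < k' \<Longrightarrow> k' < G \<Longrightarrow> mHg M k' < mHg M k"
  using hs by (simp add: homophily_setting_def)

lemma params: "0 < msp M" "msp M < 1" "0 < ms M" "ms M \<le> 1" "mHg M 1 < mvL M" "mvL M < mHg M 0" "G \<ge> 2"
  using hs by (simp_all add: homophily_setting_def)

lemma vH_ge: "x < N \<Longrightarrow> mvH M x \<ge> mHg M 0"
  using hs by (simp add: homophily_setting_def)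

lemma H_le0: "x < N \<Longrightarrow> H x \<le> mHg M 0"
  using mHg_dec[of 0 "mgrp M x"] grp_lt[of x] by (cases "mgrp M x = 0") (auto simp: Hlev_def)

lemma H_cases: "x < N \<Longrightarrow> H x > mvL M \<or> H x < mvL M"
proof -
  assume x: "x < N"
  show ?thesis
  proof (cases "mgrp M x")
    case 0 then show ?thesis using params by (simp add: Hlev_def)
  next
    case (Suc k)
    then have "H x \<le> mHg M 1" using mHg_dec[of 1 "mgrp M x"] grp_lt[OF x]
      by (cases k) (auto simp: Hlev_def)
    then show ?thesis using params by simp
  qed
qed

lemma vH_gt: "x < N \<Longrightarrow> mvH M x > mvL M"
  using vH_ge params by force

lemma vH_geH: "x < N \<Longrightarrow> y < N \<Longrightarrow> mvH M x \<ge> H y"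
  using vH_ge H_le0 by force

lemma H_eq_grp: "x < N \<Longrightarrow> y < N \<Longrightarrow> H x = H y \<Longrightarrow> mgrp M x = mgrp M y"
  using mHg_dec[of "mgrp M x" "mgrp M y"] mHg_dec[of "mgrp M y" "mgrp M x"] grp_lt[of x] grp_lt[of y]
  by (metis Hlev_def less_irrefl linorder_neqE_nat)

lemma card_grp: "x < N \<Longrightarrow> card {y \<in> {..<N}. mgrp M y = mgrp M x} = N div G"
  using hs grp_lt[of x] by (simp add: homophily_setting_def)

lemma sim_pos: "sim M i j > 0"
  using gpos params by (simp add: sim_def)

lemma G0:
  assumes i: "i < N" and Hi: "H i > mvL M" and t: "1 \<le> t"
  shows "i \<in> Dn M t"
proof -
  obtain n where n: "t = Suc n" using t by (cases t) auto
  have nn: "\<And>t'. gain M (Dn M) t' i \<ge> 0"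
    unfolding gain_def
  proof (intro sum_nonneg)
    fix t' j assume j: "j \<in> {..<N}"
    show "0 \<le> (if j \<in> Dn M t' then sim M i j * (mvH M j - H i) else (msp M - 1) * (sim M i j * (mvL M - H i)))"
      using sim_pos[of i j] vH_geH[of j i] j i params Hi
      by (cases "j \<in> Dn M t'") (simp_all add: mult_nonpos_nonpos mult_nonneg_nonpos less_imp_le)
  qed
  have g0: "gain M (Dn M) 0 i > 0"
    unfolding gain_def
  proof (rule sum_pos2[of _ i])
    show "i \<in> {..<N}" using i by simp
    show "0 < (if i \<in> Dn M 0 then sim M i i * (mvH M i - H i) else (msp M - 1) * (sim M i i * (mvL M - H i)))"
      using params Hi by (simp add: sim_def mult_neg_neg)
    fix j assume j: "j \<in> {..<N}"
    show "0 \<le> (if j \<in> Dn M 0 then sim M i j * (mvH M j - H i) else (msp M - 1) * (sim M i j * (mvL M - H i)))"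
      using sim_pos[of i j] params Hi
      by (simp add: mult_nonpos_nonpos mult_nonneg_nonpos less_imp_le)
  qed (simp)
  have "(\<Sum>t'<Suc n. gain M (Dn M) t' i) > 0"
    by (rule sum_pos2[of _ 0]) (use g0 nn in auto)
  then show ?thesis using i n mem_Dn_Suc by blast
qed

lemma gain_mono_D:
  assumes i: "i < N" and Hi: "H i < mvL M" and sub: "D t \<subseteq> D' t'"
  shows "gain M D t i \<le> gain M D' t' i"
  unfolding gain_def
proof (rule sum_mono)
  fix j assume j: "j \<in> {..<N}"
  have a: "(msp M - 1) * (sim M i j * (mvL M - H i)) \<le> 0"
    using params Hi sim_pos[of i j] by (auto intro!: mult_nonpos_nonneg)
  have b: "sim M i j * (mvH M j - H i) \<ge> 0"
    using sim_pos[of i j] vH_geH[of j i] j i by auto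
  show "(if j \<in> D t then sim M i j * (mvH M j - H i) else (msp M - 1) * (sim M i j * (mvL M - H i)))
      \<le> (if j \<in> D' t' then sim M i j * (mvH M j - H i) else (msp M - 1) * (sim M i j * (mvL M - H i)))"
    using a b sub by auto
qed

end


definition Fterm :: "model \<Rightarrow> nat \<Rightarrow> nat set \<Rightarrow> real \<Rightarrow> real" where
  "Fterm M G S h = ms M * (\<Sum>x\<in>S. mvH M x) - ms M * real (card S) * h
     + (msp M - 1) * (mvL M - h) * (1 + mgam M * ms M * (real (mN M div G) - 1)
          + ms M * ((real (mN M) - real (card S)) - real (mN M div G)))"

definition F :: "model \<Rightarrow> nat \<Rightarrow> (nat \<Rightarrow> nat set) \<Rightarrow> nat \<Rightarrow> real \<Rightarrow> real" where
  "F M G D t h = (\<Sum>t'<t. Fterm M G (D t') h)"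

lemma Fterm_aff: "Fterm M G S h = Fterm M G S 0 + h * (Fterm M G S 1 - Fterm M G S 0)"
  unfolding Fterm_def by (simp add: algebra_simps)

lemma F_aff: "F M G D t h = F M G D t 0 + h * (F M G D t 1 - F M G D t 0)"
proof -
  have "F M G D t h = (\<Sum>t'<t. Fterm M G (D t') 0 + h * (Fterm M G (D t') 1 - Fterm M G (D t') 0))"
    unfolding F_def by (rule sum.cong[OF refl], rule Fterm_aff)
  moreover have "(\<Sum>t'<t. h * (Fterm M G (D t') 1 - Fterm M G (D t') 0))
      = h * ((\<Sum>t'<t. Fterm M G (D t') 1) - (\<Sum>t'<t. Fterm M G (D t') 0))"
    by (simp add: sum_distrib_left[symmetric] sum_subtractf)
  ultimately show ?thesis unfolding F_def by (simp add: sum.distrib)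
qed

lemma aff_pos:
  fixes P Q a b x :: real
  assumes "P + a * Q > 0" "P + b * Q \<ge> 0" "a \<le> x" "x < b"
  shows "P + x * Q > 0"
proof (cases "Q \<ge> 0")
  case True
  then have "a * Q \<le> x * Q" using assms by (simp add: mult_right_mono)
  then show ?thesis using assms by linarith
next
  case False
  then have "x * Q > b * Q" using assms by (simp add: mult_strict_right_mono_neg)
  then show ?thesis using assms by linarith
qed

context hs begin

lemma simsum:
  assumes i: "i < N" and C: "C \<subseteq> {..<N}" and Gi: "{y \<in> {..<N}. mgrp M y = mgrp M i} \<subseteq> C"
  shows "(\<Sum>x\<in>C. sim M i x) = 1 + mgam M * ms M * (real (N div G) - 1) + ms M * (real (card C) - real (N div G))"
proof -
  define Gs where "Gs = {y \<in> {..<N}. mgrp M y = mgrp M i}"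
  have fC: "finite C" using C finite_subset by blast
  have fG: "finite Gs" unfolding Gs_def by simp
  have iG: "i \<in> Gs" using i unfolding Gs_def by simp
  have cG: "card Gs = N div G" unfolding Gs_def using card_grp[OF i] .
  have cG1: "card Gs \<ge> 1" using iG fG by (metis One_nat_def Suc_leI card_gt_0_iff empty_iff)
  have "(\<Sum>x\<in>C. sim M i x) = (\<Sum>x\<in>C - Gs. sim M i x) + (\<Sum>x\<in>Gs. sim M i x)"
    using sum.subset_diff[OF Gi[folded Gs_def] fC] .
  also have "(\<Sum>x\<in>C - Gs. sim M i x) = (\<Sum>x\<in>C - Gs. ms M)"
  proof (rule sum.cong[OF refl])
    fix x assume "x \<in> C - Gs"
    then have "mgrp M x \<noteq> mgrp M i" "x \<noteq> i" using C iG unfolding Gs_def by auto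
    then show "sim M i x = ms M" by (auto simp: sim_def)
  qed
  also have "\<dots> = ms M * (real (card C) - real (card Gs))"
    using card_Diff_subset[OF fG Gi[folded Gs_def]] card_mono[OF fC Gi[folded Gs_def]] by simp
  also have "(\<Sum>x\<in>Gs. sim M i x) = sim M i i + (\<Sum>x\<in>Gs - {i}. sim M i x)"
    using sum.remove[OF fG iG] .
  also have "(\<Sum>x\<in>Gs - {i}. sim M i x) = (\<Sum>x\<in>Gs - {i}. mgam M * ms M)"
    by (rule sum.cong[OF refl]) (auto simp: sim_def Gs_def)
  also have "\<dots> = mgam M * ms M * (real (card Gs) - 1)"
    using cG1 fG iG by (simp add: of_nat_diff)
  finally show ?thesis using cG by (simp add: sim_def)
qed

lemma gain_formula:
  assumes i: "i < N" and sub: "D t \<subseteq> {..<N}" and above: "\<forall>x\<in>D t. H x > H i"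
  shows "gain M D t i = Fterm M G (D t) (H i)"
proof -
  have fD: "finite (D t)" using sub finite_subset by blast
  have s1: "(\<Sum>j\<in>D t. sim M i j * (mvH M j - H i)) = (\<Sum>j\<in>D t. ms M * (mvH M j - H i))"
  proof (rule sum.cong[OF refl])
    fix j assume j: "j \<in> D t"
    then have "H j > H i" using above by auto
    then have "j \<noteq> i" "mgrp M j \<noteq> mgrp M i" by (auto simp: Hlev_def)
    then show "sim M i j * (mvH M j - H i) = ms M * (mvH M j - H i)" by (simp add: sim_def)
  qed
  have s1': "(\<Sum>j\<in>D t. ms M * (mvH M j - H i)) = ms M * (\<Sum>x\<in>D t. mvH M x) - ms M * real (card (D t)) * H i"
    by (simp add: sum_distrib_left[symmetric] sum_subtractf algebra_simps)
  have Gi: "{y \<in> {..<N}. mgrp M y = mgrp M i} \<subseteq> {..<N} - D t"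
  proof
    fix y assume "y \<in> {y \<in> {..<N}. mgrp M y = mgrp M i}"
    then have "y < N" "H y = H i" by (auto simp: Hlev_def)
    then show "y \<in> {..<N} - D t" using above by auto
  qed
  have cC: "card ({..<N} - D t) = N - card (D t)"
    using card_Diff_subset[OF fD sub] by simp
  have cD: "card (D t) \<le> N" using card_mono[OF _ sub] by simp
  have s2: "(\<Sum>j\<in>{..<N} - D t. sim M i j * (mvL M - H i)) = (mvL M - H i) * (\<Sum>j\<in>{..<N} - D t. sim M i j)"
    by (simp add: sum_distrib_left algebra_simps)
  show ?thesis
    unfolding gain_split[of D t M i, OF sub] s1 s1' s2 simsum[OF i Diff_subset Gi] cC Fterm_def
    using cD by (simp add: of_nat_diff algebra_simps)
qed

lemma F_nonneg:
  assumes "\<forall>t'<t. D t' \<subseteq> {..<N}"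
  shows "F M G D t (mvL M) \<ge> 0"
  unfolding F_def
proof (rule sum_nonneg)
  fix t' assume "t' \<in> {..<t}"
  then have sub: "D t' \<subseteq> {..<N}" using assms by auto
  have "ms M * real (card (D t')) * mvL M = ms M * (\<Sum>x\<in>D t'. mvL M)" by simp
  then have "Fterm M G (D t') (mvL M) = ms M * (\<Sum>x\<in>D t'. mvH M x - mvL M)"
    unfolding Fterm_def by (simp add: sum_subtractf algebra_simps)
  also have "\<dots> \<ge> 0" using params sub vH_gt
    by (intro mult_nonneg_nonneg sum_nonneg) (auto simp: less_imp_le)
  finally show "Fterm M G (D t') (mvL M) \<ge> 0" .
qed

lemma F_mono_H:
  assumes "\<forall>t'<t. D t' \<subseteq> {..<N}" "F M G D t a > 0" "a \<le> x" "x < mvL M"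
  shows "F M G D t x > 0"
  using aff_pos[of "F M G D t 0" a "F M G D t 1 - F M G D t 0" "mvL M" x]
    F_aff[of M G D t a] F_aff[of M G D t x] F_aff[of M G D t "mvL M"] F_nonneg[OF assms(1)] assms(2-4)
  by linarith

end


definition upper :: "model \<Rightarrow> nat set \<Rightarrow> bool" where
  "upper M D \<longleftrightarrow> (\<forall>x\<in>D. \<forall>y<mN M. Hlev M x \<le> Hlev M y \<longrightarrow> y \<in> D)"

context hs begin

lemma sumF:
  assumes i: "i < N" and abv: "\<forall>t'<t. \<forall>x\<in>Dn M t'. H x > H i"
  shows "(\<Sum>t'<t. gain M (Dn M) t' i) = F M G (Dn M) t (H i)"
  unfolding F_def
  by (rule sum.cong[OF refl], rule gain_formula) (use i abv Dn_sub in auto)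

lemma step_nest:
  assumes n: "1 \<le> n" and ch: "\<forall>t'. 1 \<le> t' \<longrightarrow> t' \<le> n \<longrightarrow> Dn M t' \<subseteq> Dn M n"
  shows "Dn M n \<subseteq> Dn M (Suc n)"
proof
  fix i assume iD: "i \<in> Dn M n"
  then have i: "i < N" using Dn_sub by blast
  show "i \<in> Dn M (Suc n)"
  proof (cases "H i > mvL M")
    case True then show ?thesis using G0[OF i] by simp
  next
    case False
    then have Hi: "H i < mvL M" using H_cases[OF i] by simp
    obtain m where m: "n = Suc m" using n by (cases n) auto
    have pos: "(\<Sum>t'<n. gain M (Dn M) t' i) > 0" using iD mem_Dn_Suc[of i M m] m by simp
    have le: "gain M (Dn M) t' i \<le> gain M (Dn M) n i" if "t' < n" for t'
    proof (rule gain_mono_D[OF i Hi])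
      show "Dn M t' \<subseteq> Dn M n" using ch that by (cases t') auto
    qed
    have "(\<Sum>t'<n. gain M (Dn M) t' i) \<le> (\<Sum>t'<n. gain M (Dn M) n i)"
      by (rule sum_mono) (use le in auto)
    also have "\<dots> = real n * gain M (Dn M) n i" by simp
    finally have "gain M (Dn M) n i > 0" using pos
      by (metis less_le_trans mult_nonneg_nonpos not_le of_nat_0_le_iff)
    then have "(\<Sum>t'<Suc n. gain M (Dn M) t' i) > 0" using pos by simp
    then show ?thesis using i mem_Dn_Suc by blast
  qed
qed

lemma step_upper:
  assumes ch: "\<forall>t'. 1 \<le> t' \<longrightarrow> t' \<le> n \<longrightarrow> Dn M t' \<subseteq> Dn M n \<and> upper M (Dn M t')"
    and nest: "1 \<le> n \<longrightarrow> Dn M n \<subseteq> Dn M (Suc n)"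
  shows "upper M (Dn M (Suc n))"
  unfolding upper_def
proof (intro ballI allI impI)
  fix i j assume iD: "i \<in> Dn M (Suc n)" and j: "j < N" and le: "H i \<le> H j"
  have i: "i < N" using iD Dn_sub by blast
  show "j \<in> Dn M (Suc n)"
  proof (cases "1 \<le> n \<and> j \<in> Dn M n")
    case True then show ?thesis using nest by blast
  next
    case False
    have abv: "\<forall>t'<Suc n. \<forall>x\<in>Dn M t'. H x > H j"
    proof (intro allI impI ballI)
      fix t' x assume t': "t' < Suc n" and x: "x \<in> Dn M t'"
      then have t1: "1 \<le> t'" by (cases t') auto
      show "H x > H j"
      proof (rule ccontr)
        assume "\<not> H x > H j"
        then have "j \<in> Dn M t'" using ch t1 t' x j unfolding upper_def by force
        then show False using ch t1 t' False by auto
      qed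
    qed
    show ?thesis
    proof (cases "H j > mvL M")
      case True then show ?thesis using G0[OF j] by simp
    next
      case Fj: False
      then have Hj: "H j < mvL M" using H_cases[OF j] by simp
      have abvi: "\<forall>t'<Suc n. \<forall>x\<in>Dn M t'. H x > H i" using abv le by force
      have "F M G (Dn M) (Suc n) (H i) > 0"
        using sumF[OF i abvi] iD mem_Dn_Suc[of i M n] by simp
      then have "F M G (Dn M) (Suc n) (H j) > 0"
        using F_mono_H[of "Suc n" "Dn M" "H i" "H j"] Dn_sub le Hj by blast
      then show ?thesis using sumF[OF j abv] j mem_Dn_Suc[of j M n] by simp
    qed
  qed
qed

lemma chain_gen:
  assumes "\<forall>t. 1 \<le> t \<longrightarrow> t < n \<longrightarrow> Dn M t \<subseteq> Dn M (Suc t)"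
  shows "1 \<le> a \<Longrightarrow> a \<le> b \<Longrightarrow> b \<le> n \<Longrightarrow> Dn M a \<subseteq> Dn M b"
proof (induction b)
  case 0 then show ?case by simp
next
  case (Suc b)
  show ?case
  proof (cases "a = Suc b")
    case True then show ?thesis by simp
  next
    case False
    then have "Dn M a \<subseteq> Dn M b" using Suc by simp
    moreover have "Dn M b \<subseteq> Dn M (Suc b)" using assms Suc.prems False by simp
    ultimately show ?thesis by blast
  qed
qed

lemma main: "\<forall>t. 1 \<le> t \<longrightarrow> t \<le> n \<longrightarrow> upper M (Dn M t) \<and> (t < n \<longrightarrow> Dn M t \<subseteq> Dn M (Suc t))"
proof (induction n)
  case 0 then show ?case by simp
next
  case (Suc n)
  have ch: "\<forall>t'. 1 \<le> t' \<longrightarrow> t' \<le> n \<longrightarrow> Dn M t' \<subseteq> Dn M n"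
    using chain_gen[of n] Suc.IH by auto
  have nest: "1 \<le> n \<longrightarrow> Dn M n \<subseteq> Dn M (Suc n)" using step_nest ch by blast
  have up: "upper M (Dn M (Suc n))" using step_upper[of n] ch Suc.IH nest by auto
  show ?case
  proof (intro allI impI)
    fix t assume t: "1 \<le> t" "t \<le> Suc n"
    show "upper M (Dn M t) \<and> (t < Suc n \<longrightarrow> Dn M t \<subseteq> Dn M (Suc t))"
    proof (cases "t = Suc n")
      case True then show ?thesis using up by simp
    next
      case False
      then have "t \<le> n" using t by simp
      then show ?thesis using Suc.IH t nest by (cases "t = n") auto
    qed
  qed
qed

lemma upper_Dn: "1 \<le> t \<Longrightarrow> upper M (Dn M t)"
  using main[of t] by simp

lemma nest_Dn: "1 \<le> t \<Longrightarrow> Dn M t \<subseteq> Dn M (Suc t)"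
  using main[of "Suc t"] by simp

lemma chain_Dn: "1 \<le> a \<Longrightarrow> a \<le> b \<Longrightarrow> Dn M a \<subseteq> Dn M b"
  using chain_gen[of b a b] nest_Dn by simp

lemma thresh:
  "\<exists>Hbar :: nat \<Rightarrow> ereal.
     (\<forall>t\<ge>1. Hbar t \<noteq> \<infinity> \<and> Dn M t = {i \<in> {..<N}. ereal (H i) > Hbar t}) \<and>
     (\<forall>t t'. 1 \<le> t \<longrightarrow> t \<le> t' \<longrightarrow> Hbar t' \<le> Hbar t)"
proof -
  define Hb where "Hb t = (if {..<N} - Dn M t = {} then -\<infinity> else ereal (Max (H ` ({..<N} - Dn M t))))" for t
  have eq: "Dn M t = {i \<in> {..<N}. ereal (H i) > Hb t}" if t: "t \<ge> 1" for t
  proof (intro set_eqI iffI)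
    fix x assume x: "x \<in> Dn M t"
    then have xN: "x < N" using Dn_sub by blast
    have "ereal (H x) > Hb t"
    proof (cases "{..<N} - Dn M t = {}")
      case True then show ?thesis by (simp add: Hb_def)
    next
      case False
      have "Max (H ` ({..<N} - Dn M t)) < H x"
      proof (subst Max_less_iff)
        show "\<forall>a\<in>H ` ({..<N} - Dn M t). a < H x"
        proof
          fix a assume "a \<in> H ` ({..<N} - Dn M t)"
          then obtain y where y: "y < N" "y \<notin> Dn M t" "a = H y" by auto
          show "a < H x"
          proof (rule ccontr)
            assume "\<not> a < H x"
            then show False using upper_Dn[OF t] x y unfolding upper_def by force
          qed
        qed
      qed (use False in auto)
      then show ?thesis using False by (simp add: Hb_def)
    qed
    then show "x \<in> {i \<in> {..<N}. ereal (H i) > Hb t}" using xN by simp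
  next
    fix x assume "x \<in> {i \<in> {..<N}. ereal (H i) > Hb t}"
    then have x: "x < N" "ereal (H x) > Hb t" by auto
    show "x \<in> Dn M t"
    proof (rule ccontr)
      assume nx: "x \<notin> Dn M t"
      then have ne: "{..<N} - Dn M t \<noteq> {}" using x by auto
      have "H x \<le> Max (H ` ({..<N} - Dn M t))" using x nx by (intro Max_ge) auto
      moreover have hb: "Hb t = ereal (Max (H ` ({..<N} - Dn M t)))" using ne by (simp add: Hb_def)
      ultimately have "ereal (H x) \<le> Hb t" by (simp only: ereal_less_eq)
      then show False using x(2) by simp
    qed
  qed
  have mono: "Hb t' \<le> Hb t" if "1 \<le> t" "t \<le> t'" for t t'
  proof -
    have sub: "{..<N} - Dn M t' \<subseteq> {..<N} - Dn M t" using chain_Dn[OF that] by blast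
    show ?thesis
    proof (cases "{..<N} - Dn M t' = {}")
      case True then show ?thesis by (simp add: Hb_def)
    next
      case False
      then have ne: "{..<N} - Dn M t \<noteq> {}" using sub by blast
      have "Max (H ` ({..<N} - Dn M t')) \<le> Max (H ` ({..<N} - Dn M t))"
        using sub False by (intro Max_mono) auto
      then show ?thesis using False ne by (simp add: Hb_def)
    qed
  qed
  show ?thesis
    by (rule exI[of _ Hb]) (use eq mono in \<open>auto simp: Hb_def\<close>)
qed

end


lemma Hlev_upd[simp]: "Hlev (M\<lparr>mgam := g\<rparr>) = Hlev M"
  by (simp add: Hlev_def fun_eq_iff)

lemma hs_upd: "homophily_setting M G \<Longrightarrow> 0 < g \<Longrightarrow> hs (M\<lparr>mgam := g\<rparr>) G"
  by (simp add: hs_def homophily_setting_def)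

lemma gain_mono_gam:
  assumes s: "0 < ms M" and g: "g1 \<le> g2" and sp: "msp M < 1" and Hi: "Hlev M i < mvL M"
    and dg: "\<forall>j\<in>D t. mgrp M j \<noteq> mgrp M i"
  shows "gain (M\<lparr>mgam := g2\<rparr>) D t i \<le> gain (M\<lparr>mgam := g1\<rparr>) D t i"
proof -
  have e1: "mN (M\<lparr>mgam := g2\<rparr>) = mN M" "mN (M\<lparr>mgam := g1\<rparr>) = mN M" by simp_all
  show ?thesis unfolding gain_def e1
proof (rule sum_mono)
  fix j assume j: "j \<in> {..<mN M}"
  have s12: "sim (M\<lparr>mgam := g1\<rparr>) i j \<le> sim (M\<lparr>mgam := g2\<rparr>) i j"
    using s g by (simp add: sim_def mult_right_mono)
  have k: "(msp M - 1) * (mvL M - Hlev M i) \<le> 0"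
    using sp Hi by (simp add: mult_nonpos_nonneg)
  show "(if j \<in> D t then sim (M\<lparr>mgam := g2\<rparr>) i j * (mvH (M\<lparr>mgam := g2\<rparr>) j - Hlev (M\<lparr>mgam := g2\<rparr>) i)
          else (msp (M\<lparr>mgam := g2\<rparr>) - 1) * (sim (M\<lparr>mgam := g2\<rparr>) i j * (mvL (M\<lparr>mgam := g2\<rparr>) - Hlev (M\<lparr>mgam := g2\<rparr>) i)))
      \<le> (if j \<in> D t then sim (M\<lparr>mgam := g1\<rparr>) i j * (mvH (M\<lparr>mgam := g1\<rparr>) j - Hlev (M\<lparr>mgam := g1\<rparr>) i)
          else (msp (M\<lparr>mgam := g1\<rparr>) - 1) * (sim (M\<lparr>mgam := g1\<rparr>) i j * (mvL (M\<lparr>mgam := g1\<rparr>) - Hlev (M\<lparr>mgam := g1\<rparr>) i)))"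
  proof (cases "j \<in> D t")
    case True
    then have "mgrp M j \<noteq> mgrp M i" "j \<noteq> i" using dg by auto
    then show ?thesis using True by (simp add: sim_def)
  next
    case False
    have "((msp M - 1) * (mvL M - Hlev M i)) * sim (M\<lparr>mgam := g2\<rparr>) i j
        \<le> ((msp M - 1) * (mvL M - Hlev M i)) * sim (M\<lparr>mgam := g1\<rparr>) i j"
      by (rule mult_left_mono_neg[OF s12 k])
    then show ?thesis using False by (simp add: algebra_simps)
  qed
qed
qed

lemma gam_mono:
  assumes h0: "homophily_setting M G" and g: "0 < g" "g < g'"
  shows "\<forall>t. 1 \<le> t \<longrightarrow> t \<le> n \<longrightarrow> Dn (M\<lparr>mgam := g'\<rparr>) t \<subseteq> Dn (M\<lparr>mgam := g\<rparr>) t"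
proof (induction n)
  case 0 then show ?case by simp
next
  case (Suc n)
  interpret A: hs "M\<lparr>mgam := g\<rparr>" G using hs_upd[OF h0] g by simp
  interpret B: hs "M\<lparr>mgam := g'\<rparr>" G using hs_upd[OF h0] g by simp
  have sp: "msp M < 1" "0 < ms M" using h0 by (simp_all add: homophily_setting_def)
  have new: "Dn (M\<lparr>mgam := g'\<rparr>) (Suc n) \<subseteq> Dn (M\<lparr>mgam := g\<rparr>) (Suc n)"
  proof
    fix i assume iD: "i \<in> Dn (M\<lparr>mgam := g'\<rparr>) (Suc n)"
    then have i: "i < mN M" using Dn_sub by force
    show "i \<in> Dn (M\<lparr>mgam := g\<rparr>) (Suc n)"
    proof (cases "Hlev M i > mvL M")
      case True then show ?thesis using A.G0[of i] i by simp
    next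
      case False
      then have Hi: "Hlev M i < mvL M" using A.H_cases[of i] i by simp
      show ?thesis
      proof (cases "1 \<le> n \<and> i \<in> Dn (M\<lparr>mgam := g'\<rparr>) n")
        case True
        then show ?thesis using Suc.IH A.nest_Dn[of n] by auto
      next
        case F: False
        have notin: "i \<notin> Dn (M\<lparr>mgam := g'\<rparr>) t'" if "t' < Suc n" for t'
        proof
          assume it: "i \<in> Dn (M\<lparr>mgam := g'\<rparr>) t'"
          then have "1 \<le> t'" by (cases t') auto
          then show False using B.chain_Dn[of t' n] that F it by auto
        qed
        have step: "gain (M\<lparr>mgam := g'\<rparr>) (Dn (M\<lparr>mgam := g'\<rparr>)) t' i
             \<le> gain (M\<lparr>mgam := g\<rparr>) (Dn (M\<lparr>mgam := g\<rparr>)) t' i" if t': "t' < Suc n" for t'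
        proof -
          have dg: "\<forall>j\<in>Dn (M\<lparr>mgam := g'\<rparr>) t'. mgrp M j \<noteq> mgrp M i"
          proof
            fix j assume j: "j \<in> Dn (M\<lparr>mgam := g'\<rparr>) t'"
            then have t1: "1 \<le> t'" by (cases t') auto
            have jN: "j < mN M" using j Dn_sub by force
            show "mgrp M j \<noteq> mgrp M i"
            proof
              assume "mgrp M j = mgrp M i"
              then have "Hlev M j \<le> Hlev M i" by (simp add: Hlev_def)
              then have "i \<in> Dn (M\<lparr>mgam := g'\<rparr>) t'"
                using B.upper_Dn[OF t1] j i unfolding upper_def by simp
              then show False using notin t' by blast
            qed
          qed
          have 1: "gain (M\<lparr>mgam := g'\<rparr>) (Dn (M\<lparr>mgam := g'\<rparr>)) t' i
             \<le> gain (M\<lparr>mgam := g\<rparr>) (Dn (M\<lparr>mgam := g'\<rparr>)) t' i"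
            using gain_mono_gam[of M g g' i "Dn (M\<lparr>mgam := g'\<rparr>)" t'] sp g Hi dg by simp
          have sub: "Dn (M\<lparr>mgam := g'\<rparr>) t' \<subseteq> Dn (M\<lparr>mgam := g\<rparr>) t'"
            using Suc.IH t' by (cases t') auto
          have 2: "gain (M\<lparr>mgam := g\<rparr>) (Dn (M\<lparr>mgam := g'\<rparr>)) t' i
             \<le> gain (M\<lparr>mgam := g\<rparr>) (Dn (M\<lparr>mgam := g\<rparr>)) t' i"
            using A.gain_mono_D[of i "Dn (M\<lparr>mgam := g'\<rparr>)" t' "Dn (M\<lparr>mgam := g\<rparr>)" t'] i Hi sub by simp
          show ?thesis using 1 2 by linarith
        qed
        have "(\<Sum>t'<Suc n. gain (M\<lparr>mgam := g'\<rparr>) (Dn (M\<lparr>mgam := g'\<rparr>)) t' i) > 0"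
          using iD mem_Dn_Suc[of i "M\<lparr>mgam := g'\<rparr>" n] by simp
        moreover have "(\<Sum>t'<Suc n. gain (M\<lparr>mgam := g'\<rparr>) (Dn (M\<lparr>mgam := g'\<rparr>)) t' i)
            \<le> (\<Sum>t'<Suc n. gain (M\<lparr>mgam := g\<rparr>) (Dn (M\<lparr>mgam := g\<rparr>)) t' i)"
          by (rule sum_mono) (use step in auto)
        ultimately have "(\<Sum>t'<Suc n. gain (M\<lparr>mgam := g\<rparr>) (Dn (M\<lparr>mgam := g\<rparr>)) t' i) > 0" by linarith
        then show ?thesis using mem_Dn_Suc[of i "M\<lparr>mgam := g\<rparr>" n] i by simp
      qed
    qed
  qed
  show ?case
  proof (intro allI impI)
    fix t assume "1 \<le> t" "t \<le> Suc n"
    then show "Dn (M\<lparr>mgam := g'\<rparr>) t \<subseteq> Dn (M\<lparr>mgam := g\<rparr>) t"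
      using Suc.IH new by (cases "t = Suc n") auto
  qed
qed

theorem proposition4:
  assumes "homophily_setting M G"
  shows "(\<forall>\<gamma>. 0 < \<gamma> \<longrightarrow> \<gamma> < 1 / ms M \<longrightarrow>
            (\<exists>Hbar :: nat \<Rightarrow> ereal.
               (\<forall>t\<ge>1. Hbar t \<noteq> \<infinity> \<and>
                   Dn (M\<lparr>mgam := \<gamma>\<rparr>) t = {i \<in> {..<mN M}. ereal (Hlev M i) > Hbar t}) \<and>
               (\<forall>t t'. 1 \<le> t \<longrightarrow> t \<le> t' \<longrightarrow> Hbar t' \<le> Hbar t)))
       \<and> (\<forall>\<gamma> \<gamma>'. 0 < \<gamma> \<longrightarrow> \<gamma> < \<gamma>' \<longrightarrow> \<gamma>' < 1 / ms M \<longrightarrow>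
            (\<forall>t\<ge>1. Dn (M\<lparr>mgam := \<gamma>'\<rparr>) t \<subseteq> Dn (M\<lparr>mgam := \<gamma>\<rparr>) t))"
proof (intro conjI allI impI)
  fix g :: real assume g: "0 < g"
  show "\<exists>Hbar :: nat \<Rightarrow> ereal.
               (\<forall>t\<ge>1. Hbar t \<noteq> \<infinity> \<and>
                   Dn (M\<lparr>mgam := g\<rparr>) t = {i \<in> {..<mN M}. ereal (Hlev M i) > Hbar t}) \<and>
               (\<forall>t t'. 1 \<le> t \<longrightarrow> t \<le> t' \<longrightarrow> Hbar t' \<le> Hbar t)"
    using hs.thresh[OF hs_upd[OF assms g]] by simp
next
  fix g g' :: real and t :: nat assume "0 < g" "g < g'" "1 \<le> t"
  then show "Dn (M\<lparr>mgam := g'\<rparr>) t \<subseteq> Dn (M\<lparr>mgam := g\<rparr>) t"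
    using gam_mono[OF assms, of g g' t] by simp
qed


end
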